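(* Let $\Sigma\in\mathbb{R}^{n\times n}$ be symmetric positive definite, let $C_0\in\mathbb{R}^{n\times n}$ be symmetric positive semidefinite, and define $C_{i+1}=\Sigma-\Sigma(C_i+\Sigma)^{-1}\Sigma$ for $i\ge0$. If $\tilde w\ne0$ and $\tilde\delta_i$ satisfy $C_i\tilde w=\tilde\delta_i\Sigma\tilde w$, then $C_{i+1}\tilde w=\tilde\delta_{i+1}\Sigma\tilde w$ with $\tilde\delta_{i+1}=\tilde\delta_i/(1+\tilde\delta_i)$.
   Context: In the paper $C_0=H\Gamma_0H^\top$, where $\Gamma_0$ is the empirical covariance of the initial EKI ensemble and $H$ is the linear observation operator; $C_i$ is an idealized observation-space covariance for stochastic EKI. *)

theory Defs
  imports "HOL-Analysis.Analysis"
begin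

definition symmetric_matrix :: "real^'n^'n \<Rightarrow> bool" where
  "symmetric_matrix A \<longleftrightarrow> transpose A = A"

definition pos_def_matrix :: "real^'n^'n \<Rightarrow> bool" where
  "pos_def_matrix A \<longleftrightarrow> symmetric_matrix A \<and> (\<forall>x. x \<noteq> 0 \<longrightarrow> x \<bullet> (A *v x) > 0)"

definition pos_semidef_matrix :: "real^'n^'n \<Rightarrow> bool" where
  "pos_semidef_matrix A \<longleftrightarrow> symmetric_matrix A \<and> (\<forall>x. x \<bullet> (A *v x) \<ge> 0)"

end

theory Submission
  imports Defs
begin

lemma minv_props:
  fixes M :: "real^'n^'n"
  assumes "\<And>x. x \<noteq> 0 \<Longrightarrow> x \<bullet> (M *v x) > 0"
  shows "M ** matrix_inv M = mat 1 \<and> matrix_inv M ** M = mat 1"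
proof -
  have "\<forall>x. M *v x = 0 \<longrightarrow> x = 0"
    using assms by (metis inner_zero_right less_irrefl)
  then have "\<exists>B. B ** M = mat 1" using matrix_left_invertible_ker by blast
  then have "invertible M" using invertible_left_inverse by blast
  then have "\<exists>A'. M ** A' = mat 1 \<and> A' ** M = mat 1" unfolding invertible_def by blast
  then show ?thesis unfolding matrix_inv_def by (rule someI_ex)
qed

lemma sym_swap:
  fixes S :: "real^'n^'n"
  assumes "symmetric_matrix S"
  shows "x \<bullet> (S *v y) = y \<bullet> (S *v x)"
proof -
  have "x \<bullet> (S *v y) = (x v* S) \<bullet> y" by (simp add: dot_lmul_matrix)
  also have "x v* S = transpose S *v x" by simp
  also have "\<dots> = S *v x" using assms unfolding symmetric_matrix_def by simp
  finally show ?thesis by (simp add: inner_commute)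
qed

lemma step_psd:
  fixes S C :: "real^'n^'n"
  assumes S: "pos_def_matrix S" and C: "\<And>x. x \<bullet> (C *v x) \<ge> 0"
  shows "x \<bullet> ((S - S ** matrix_inv (C + S) ** S) *v x) \<ge> 0"
proof -
  let ?M = "C + S" let ?N = "matrix_inv (C + S)"
  have pd: "\<And>x. x \<noteq> 0 \<Longrightarrow> x \<bullet> (?M *v x) > 0"
    using S C unfolding pos_def_matrix_def
    by (metis add.commute add_pos_nonneg inner_add_right matrix_vector_mult_add_rdistrib)
  have inv: "?M ** ?N = mat 1" using minv_props[OF pd] by blast
  have sym: "symmetric_matrix S" using S unfolding pos_def_matrix_def by blast
  define y where "y = ?N *v (S *v x)"
  have My: "?M *v y = S *v x"
  proof -
    have "?M ** (?N ** S) = S" by (metis matrix_mul_assoc inv matrix_mul_lid)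
    then show ?thesis by (simp add: y_def matrix_vector_mul_assoc)
  qed
  have e1: "(S - S ** ?N ** S) *v x = S *v x - S *v y"
    unfolding y_def by (simp add: matrix_vector_mult_diff_rdistrib matrix_vector_mul_assoc matrix_mul_assoc)
  have e2: "x \<bullet> (S *v y) = y \<bullet> (S *v x)" using sym_swap[OF sym] .
  have e3: "y \<bullet> (S *v x) = y \<bullet> (C *v y) + y \<bullet> (S *v y)"
    using My by (metis inner_add_right matrix_vector_mult_add_rdistrib)
  have e4: "(x - y) \<bullet> (S *v (x - y)) = x \<bullet> (S *v x) - x \<bullet> (S *v y) - y \<bullet> (S *v x) + y \<bullet> (S *v y)"
    by (simp add: matrix_vector_mult_diff_distrib inner_diff_left inner_diff_right)
  have n1: "(x - y) \<bullet> (S *v (x - y)) \<ge> 0"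
    using S unfolding pos_def_matrix_def
    by (metis inner_zero_left less_eq_real_def)
  have "x \<bullet> ((S - S ** ?N ** S) *v x) = (x - y) \<bullet> (S *v (x - y)) + y \<bullet> (C *v y)"
    using e1 e2 e3 e4 by (simp add: inner_diff_right)
  then show ?thesis using n1 C[of y] by simp
qed

theorem proposition4p2:
  fixes Sigma :: "real^'n^'n" and C :: "nat \<Rightarrow> real^'n^'n"
    and w :: "real^'n" and i :: nat and \<delta> :: real
  assumes "pos_def_matrix Sigma"
    and "pos_semidef_matrix (C 0)"
    and "\<And>j. C (Suc j) = Sigma - Sigma ** matrix_inv (C j + Sigma) ** Sigma"
    and "w \<noteq> 0"
    and "C i *v w = \<delta> *s (Sigma *v w)"
  shows "C (Suc i) *v w = (\<delta> / (1 + \<delta>)) *s (Sigma *v w)"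
proof -
  have psd: "\<And>x. x \<bullet> (C j *v x) \<ge> 0" for j
  proof (induction j)
    case 0 then show ?case using assms(2) unfolding pos_semidef_matrix_def by blast
  next
    case (Suc j) then show ?case using step_psd[OF assms(1)] assms(3) by metis
  qed
  let ?M = "C i + Sigma" let ?N = "matrix_inv (C i + Sigma)"
  have pd: "\<And>x. x \<noteq> 0 \<Longrightarrow> x \<bullet> (?M *v x) > 0"
    using assms(1) psd unfolding pos_def_matrix_def
    by (metis add.commute add_pos_nonneg inner_add_right matrix_vector_mult_add_rdistrib)
  have inv: "?N ** ?M = mat 1" using minv_props[OF pd] by blast
  have pw: "w \<bullet> (Sigma *v w) > 0" using assms(1,4) unfolding pos_def_matrix_def by blast
  have "w \<bullet> (C i *v w) = \<delta> * (w \<bullet> (Sigma *v w))" using assms(5) by (simp add: scalar_mult_eq_scaleR)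
  then have "\<delta> * (w \<bullet> (Sigma *v w)) \<ge> 0" using psd by (metis)
  then have d0: "\<delta> \<ge> 0" using pw by (simp add: zero_le_mult_iff)
  have "?M *v w = (1 + \<delta>) *s (Sigma *v w)"
    using assms(5) by (simp add: matrix_vector_mult_add_rdistrib vector_sadd_rdistrib)
  then have "?N *v (?M *v w) = (1 + \<delta>) *s (?N *v (Sigma *v w))"
    by (simp add: vector_scalar_commute vector_sadd_rdistrib matrix_vector_right_distrib)
  then have "w = (1 + \<delta>) *s (?N *v (Sigma *v w))"
    by (simp add: matrix_vector_mul_assoc inv)
  then have Nw: "?N *v (Sigma *v w) = (1 / (1 + \<delta>)) *s w"
  proof -
    assume h: "w = (1 + \<delta>) *s (?N *v (Sigma *v w))"
    have "(1 / (1 + \<delta>)) *s w = ((1 / (1 + \<delta>)) * (1 + \<delta>)) *s (?N *v (Sigma *v w))"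
      by (subst h) (simp only: vector_smult_assoc)
    also have "(1 / (1 + \<delta>)) * (1 + \<delta>) = 1" using d0 by simp
    finally show ?thesis by simp
  qed
  have "C (Suc i) *v w = Sigma *v w - Sigma *v (?N *v (Sigma *v w))"
    using assms(3) by (simp add: matrix_vector_mult_diff_rdistrib matrix_vector_mul_assoc matrix_mul_assoc)
  also have "\<dots> = Sigma *v w - (1 / (1 + \<delta>)) *s (Sigma *v w)"
    by (simp add: Nw vector_scalar_commute)
  also have "\<dots> = (\<delta> / (1 + \<delta>)) *s (Sigma *v w)"
    using d0 by (simp add: vec_eq_iff field_simps)
  finally show ?thesis .
qed

end
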